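(* Let $B_1,\dots,B_k$ be finite blocks (nonseparable graphs, i.e. connected graphs with no cut vertex), each of which admits an $\alpha$-labeling. Then the disjoint union $B_1\cup B_2\cup\dots\cup B_k$ is odd-graceful.
   Context: For a graph $G$ with $n$ edges, a graceful labeling is an injection $f:V(G)\to\{0,1,\dots,n\}$ such that the edge weights $|f(x)-f(y)|$, $xy\in E(G)$, are exactly $\{1,2,\dots,n\}$. An $\alpha$-labeling is a graceful labeling $f$ for which there is an integer $\lambda$ such that for every edge $xy$ either $f(x)\le\lambda<f(y)$ or $f(y)\le\lambda<f(x)$. A graph $G$ with $n$ edges is odd-graceful if there is an injective map $f:V(G)\to\{0,1,\dots,2n-1\}$ such that the set of edge weights $\{|f(x)-f(y)| : xy\in E(G)\}$ equals $\{1,3,\dots,2n-1\}$. *)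

theory Defs
  imports Main
begin

definition simple_graph :: "'a set \<Rightarrow> 'a set set \<Rightarrow> bool" where
  "simple_graph V E \<longleftrightarrow> finite V \<and>
     (\<forall>e\<in>E. \<exists>x y. x \<noteq> y \<and> x \<in> V \<and> y \<in> V \<and> e = {x, y})"

definition adj :: "'a set set \<Rightarrow> 'a \<Rightarrow> 'a \<Rightarrow> bool" where
  "adj E x y \<longleftrightarrow> {x, y} \<in> E"

definition connected_graph :: "'a set \<Rightarrow> 'a set set \<Rightarrow> bool" where
  "connected_graph V E \<longleftrightarrow> V \<noteq> {} \<and> (\<forall>x\<in>V. \<forall>y\<in>V. (adj E)\<^sup>*\<^sup>* x y)"

definition del_vertex_E :: "'a set set \<Rightarrow> 'a \<Rightarrow> 'a set set" where
  "del_vertex_E E v = {e \<in> E. v \<notin> e}"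

definition cut_vertex :: "'a set \<Rightarrow> 'a set set \<Rightarrow> 'a \<Rightarrow> bool" where
  "cut_vertex V E v \<longleftrightarrow> v \<in> V \<and>
     (\<exists>x\<in>V - {v}. \<exists>y\<in>V - {v}. \<not> (adj (del_vertex_E E v))\<^sup>*\<^sup>* x y)"

definition nonseparable :: "'a set \<Rightarrow> 'a set set \<Rightarrow> bool" where
  "nonseparable V E \<longleftrightarrow> simple_graph V E \<and> connected_graph V E \<and> (\<forall>v. \<not> cut_vertex V E v)"

definition edge_weights :: "('a \<Rightarrow> nat) \<Rightarrow> 'a set set \<Rightarrow> nat set" where
  "edge_weights f E = {w. \<exists>x y. {x, y} \<in> E \<and> x \<noteq> y \<and> w = nat \<bar>int (f x) - int (f y)\<bar>}"

definition graceful_labeling :: "'a set \<Rightarrow> 'a set set \<Rightarrow> ('a \<Rightarrow> nat) \<Rightarrow> bool" where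
  "graceful_labeling V E f \<longleftrightarrow> inj_on f V \<and> f ` V \<subseteq> {0..card E} \<and>
     edge_weights f E = {1..card E}"

definition alpha_labeling :: "'a set \<Rightarrow> 'a set set \<Rightarrow> ('a \<Rightarrow> nat) \<Rightarrow> bool" where
  "alpha_labeling V E f \<longleftrightarrow> graceful_labeling V E f \<and>
     (\<exists>lam::int. \<forall>x y. {x, y} \<in> E \<and> x \<noteq> y \<longrightarrow>
        (int (f x) \<le> lam \<and> lam < int (f y)) \<or> (int (f y) \<le> lam \<and> lam < int (f x)))"

definition has_alpha_labeling :: "'a set \<Rightarrow> 'a set set \<Rightarrow> bool" where
  "has_alpha_labeling V E \<longleftrightarrow> (\<exists>f. alpha_labeling V E f)"

definition odd_graceful :: "'a set \<Rightarrow> 'a set set \<Rightarrow> bool" where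
  "odd_graceful V E \<longleftrightarrow> (\<exists>f::'a \<Rightarrow> nat. inj_on f V \<and> f ` V \<subseteq> {0..<2 * card E} \<and>
     edge_weights f E = {w. odd w \<and> w < 2 * card E})"

text \<open>Disjoint union of the graphs (V i, E i), i < k; vertex (i,x) is copy of x in block i.\<close>
definition disj_union_V :: "nat \<Rightarrow> (nat \<Rightarrow> 'a set) \<Rightarrow> (nat \<times> 'a) set" where
  "disj_union_V k V = (SIGMA i:{..<k}. V i)"

definition disj_union_E :: "nat \<Rightarrow> (nat \<Rightarrow> 'a set set) \<Rightarrow> (nat \<times> 'a) set set" where
  "disj_union_E k E = (\<Union>i<k. (\<lambda>e. Pair i ` e) ` E i)"

end

theory Submission
  imports Defs
begin

lemma find_block:
  fixes n :: "nat \<Rightarrow> nat"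
  shows "m < sum n {0..<k} \<Longrightarrow> \<exists>i<k. sum n {0..<i} \<le> m \<and> m < sum n {0..<Suc i}"
proof (induction k)
  case 0 then show ?case by simp
next
  case (Suc k)
  show ?case
  proof (cases "m < sum n {0..<k}")
    case True then show ?thesis using Suc.IH by (meson less_SucI)
  next
    case False then show ?thesis using Suc.prems by (intro exI[of _ k]) auto
  qed
qed

lemma card_union_E:
  assumes fin: "\<forall>i<k. finite (E i)" and ne: "\<forall>i<k. {} \<notin> E i"
  shows "card (disj_union_E k E) = (\<Sum>i<k. card (E i))"
proof -
  have injp: "inj (\<lambda>e. Pair i ` e)" for i :: nat
    by (rule injI) (auto simp: image_def set_eq_iff)
  have "card (disj_union_E k E) = (\<Sum>i\<in>{..<k}. card ((\<lambda>e. Pair i ` e) ` E i))"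
    unfolding disj_union_E_def
  proof (rule card_UN_disjoint)
    show "\<forall>i\<in>{..<k}. \<forall>j\<in>{..<k}. i \<noteq> j \<longrightarrow> (\<lambda>e. Pair i ` e) ` E i \<inter> (\<lambda>e. Pair j ` e) ` E j = {}"
    proof (intro ballI impI)
      fix i j assume ij: "i \<in> {..<k}" "j \<in> {..<k}" "i \<noteq> j"
      show "(\<lambda>e. Pair i ` e) ` E i \<inter> (\<lambda>e. Pair j ` e) ` E j = {}"
      proof (rule ccontr)
        assume "(\<lambda>e. Pair i ` e) ` E i \<inter> (\<lambda>e. Pair j ` e) ` E j \<noteq> {}"
        then obtain a b where a: "a \<in> E i" and b: "b \<in> E j" and eq: "Pair i ` a = Pair j ` b" by blast
        from a ne ij have "a \<noteq> {}" by auto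
        then obtain x where "x \<in> a" by blast
        then have "(i, x) \<in> Pair j ` b" using eq by blast
        then show False using ij by auto
      qed
    qed
  qed (use fin in auto)
  also have "\<dots> = (\<Sum>i<k. card (E i))"
    by (rule sum.cong) (auto intro: card_image inj_on_subset[OF injp])
  finally show ?thesis .
qed

lemma union_odd_graceful:
  fixes V :: "nat \<Rightarrow> 'a set" and E :: "nat \<Rightarrow> 'a set set"
    and f :: "nat \<Rightarrow> 'a \<Rightarrow> nat" and lam :: "nat \<Rightarrow> nat"
  assumes fin: "\<forall>i<k. finite (E i)"
    and edges: "\<forall>i<k. \<forall>e\<in>E i. \<exists>x y. x \<noteq> y \<and> x \<in> V i \<and> y \<in> V i \<and> e = {x, y}"
    and inj: "\<forall>i<k. inj_on (f i) (V i)"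
    and rng: "\<forall>i<k. f i ` V i \<subseteq> {0..card (E i)}"
    and ew: "\<forall>i<k. edge_weights (f i) (E i) = {1..card (E i)}"
    and sep: "\<forall>i<k. \<forall>x y. {x, y} \<in> E i \<and> x \<noteq> y \<longrightarrow>
                 (f i x \<le> lam i \<and> lam i < f i y) \<or> (f i y \<le> lam i \<and> lam i < f i x)"
    and lamn: "\<forall>i<k. lam i < card (E i)"
  shows "odd_graceful (disj_union_V k V) (disj_union_E k E)"
proof -
  define n where "n i = card (E i)" for i
  define S where "S i = sum n {0..<i}" for i
  define h where "h l = 2 * lam l + 1" for l
  define c where "c i = sum h {Suc i..<k}" for i
  define P where "P i = sum h {i..<k}" for i
  define N where "N = S k"
  define g where "g = (\<lambda>(i, x). if f i x \<le> lam i then 2 * f i x + c i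
                         else 2 * f i x + c i + 2 * S i - 1)"
  have hn: "h l \<le> 2 * n l" if "l < k" for l
    using lamn that unfolding h_def n_def by force
  have SSuc: "S (Suc i) = S i + n i" for i unfolding S_def by simp
  have Pc: "P i = h i + c i" if "i < k" for i
    unfolding P_def c_def using that by (simp add: sum.atLeast_Suc_lessThan)
  have F1: "P j \<le> c i" if "i < j" "j < k" for i j
    unfolding P_def c_def using that sum.atLeastLessThan_concat[of "Suc i" j k h] by simp
  have hsum: "sum h {a..<b} \<le> 2 * sum n {a..<b}" if "b \<le> k" for a b
  proof -
    have "sum h {a..<b} \<le> sum (\<lambda>l. 2 * n l) {a..<b}"
      by (rule sum_mono) (use hn that in auto)
    then show ?thesis by (simp add: sum_distrib_left)
  qed
  have F2: "c i + 2 * S (Suc i) \<le> P j + 2 * S j" if "i < j" "j < k" for i j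
  proof -
    have "c i = sum h {Suc i..<j} + P j"
      unfolding P_def c_def using that sum.atLeastLessThan_concat[of "Suc i" j k h] by simp
    moreover have "S j = S (Suc i) + sum n {Suc i..<j}"
      unfolding S_def using that sum.atLeastLessThan_concat[of 0 "Suc i" j n] by simp
    moreover have "sum h {Suc i..<j} \<le> 2 * sum n {Suc i..<j}" using hsum that by simp
    ultimately show ?thesis by linarith
  qed
  have F3: "P i \<le> P j + 2 * S j" if "j \<le> k" for i j
  proof -
    have "P i \<le> P 0" unfolding P_def by (rule sum_mono2) auto
    moreover have "P 0 = sum h {0..<j} + P j"
      unfolding P_def using that sum.atLeastLessThan_concat[of 0 j k h] by simp
    moreover have "sum h {0..<j} \<le> 2 * S j" unfolding S_def using hsum that by simp
    ultimately show ?thesis by linarith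
  qed
  have F4: "c i + 2 * S (Suc i) \<le> 2 * N" if "i < k" for i
  proof -
    have "S k = S (Suc i) + sum n {Suc i..<k}"
      unfolding S_def using that sum.atLeastLessThan_concat[of 0 "Suc i" k n] by simp
    moreover have "c i \<le> 2 * sum n {Suc i..<k}" unfolding c_def using hsum by simp
    ultimately show ?thesis unfolding N_def by linarith
  qed
  have PN: "P i \<le> 2 * N" for i using F3[of k i] unfolding N_def P_def by simp
  have fle: "f i x \<le> n i" if "i < k" "x \<in> V i" for i x
  proof -
    have "f i x \<in> {0..card (E i)}" using rng that by blast
    then show ?thesis unfolding n_def by simp
  qed
  have low: "c i \<le> g (i, x) \<and> g (i, x) < P i" if "i < k" "f i x \<le> lam i" for i x
    using that Pc[OF that(1)] unfolding g_def h_def by auto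
  have high: "P i + 2 * S i \<le> g (i, x) \<and> g (i, x) < c i + 2 * S (Suc i)"
    if "i < k" "x \<in> V i" "\<not> f i x \<le> lam i" for i x
    using that Pc[OF that(1)] fle[OF that(1,2)] SSuc[of i] unfolding g_def h_def by auto
  have cardE: "card (disj_union_E k E) = N"
  proof -
    have ne: "\<forall>i<k. {} \<notin> E i" using edges by blast
    show ?thesis using card_union_E[OF fin ne] unfolding N_def S_def n_def
      by (simp add: atLeast0LessThan)
  qed
  have injg: "inj_on g (disj_union_V k V)"
  proof (rule inj_onI)
    fix p q assume p: "p \<in> disj_union_V k V" and q: "q \<in> disj_union_V k V" and eq: "g p = g q"
    obtain i x where pi: "p = (i, x)" "i < k" "x \<in> V i" using p unfolding disj_union_V_def by auto
    obtain j y where qj: "q = (j, y)" "j < k" "y \<in> V j" using q unfolding disj_union_V_def by auto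
    have gen: "i' = j' \<and> x' = y'"
      if A: "i' < k" "x' \<in> V i'" "j' < k" "y' \<in> V j'" "g (i', x') = g (j', y')" "i' \<le> j'" for i' j' x' y'
    proof (cases "i' = j'")
      case True
      show ?thesis
      proof (cases "f i' x' \<le> lam i'"; cases "f j' y' \<le> lam j'")
        assume "f i' x' \<le> lam i'" "f j' y' \<le> lam j'"
        then have "f i' x' = f i' y'" using A(5) True unfolding g_def by simp
        then show ?thesis using inj A True by (auto dest: inj_onD)
      next
        assume "\<not> f i' x' \<le> lam i'" "\<not> f j' y' \<le> lam j'"
        then have "f i' x' = f i' y'" using A(5) True unfolding g_def by simp
        then show ?thesis using inj A True by (auto dest: inj_onD)
      next
        assume a: "f i' x' \<le> lam i'" "\<not> f j' y' \<le> lam j'"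
        then show ?thesis using low[OF A(1) a(1)] high[OF A(3,4) a(2)] A(5) True by simp
      next
        assume a: "\<not> f i' x' \<le> lam i'" "f j' y' \<le> lam j'"
        then show ?thesis using high[OF A(1,2) a(1)] low[OF A(3) a(2)] A(5) True by simp
      qed
    next
      case False
      then have lt: "i' < j'" using A(6) by simp
      show ?thesis
      proof (cases "f i' x' \<le> lam i'"; cases "f j' y' \<le> lam j'")
        assume a: "f i' x' \<le> lam i'" "f j' y' \<le> lam j'"
        then show ?thesis using low[OF A(1) a(1)] low[OF A(3) a(2)] A(5) F1[OF lt A(3)] by simp
      next
        assume a: "\<not> f i' x' \<le> lam i'" "\<not> f j' y' \<le> lam j'"
        then show ?thesis using high[OF A(1,2) a(1)] high[OF A(3,4) a(2)] A(5) F2[OF lt A(3)] by simp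
      next
        assume a: "f i' x' \<le> lam i'" "\<not> f j' y' \<le> lam j'"
        then show ?thesis using low[OF A(1) a(1)] high[OF A(3,4) a(2)] A(5) F3[of j' i'] A(3) by simp
      next
        assume a: "\<not> f i' x' \<le> lam i'" "f j' y' \<le> lam j'"
        then show ?thesis using high[OF A(1,2) a(1)] low[OF A(3) a(2)] A(5) F3[of i' j'] A(1) by simp
      qed
    qed
    show "p = q"
    proof (cases "i \<le> j")
      case True then show ?thesis using gen[of i x j y] pi qj eq by simp
    next
      case False then show ?thesis using gen[of j y i x] pi qj eq by simp
    qed
  qed
  have rngg: "g ` disj_union_V k V \<subseteq> {0..<2 * card (disj_union_E k E)}"
  proof
    fix w assume "w \<in> g ` disj_union_V k V"
    then obtain i x where ix: "i < k" "x \<in> V i" "w = g (i, x)" unfolding disj_union_V_def by auto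
    show "w \<in> {0..<2 * card (disj_union_E k E)}"
    proof (cases "f i x \<le> lam i")
      case True then show ?thesis using low[OF ix(1) True] PN[of i] ix cardE by simp
    next
      case False then show ?thesis using high[OF ix(1,2) False] F4[OF ix(1)] ix cardE by simp
    qed
  qed
  have wt: "nat \<bar>int (g (i, y)) - int (g (i, x))\<bar> = 2 * (f i y - f i x) + 2 * S i - 1
             \<and> f i y - f i x \<in> {1..n i}"
    if A: "i < k" "{x, y} \<in> E i" "x \<noteq> y" "f i x \<le> lam i" "lam i < f i y" for i x y
  proof
    have "f i y - f i x \<in> edge_weights (f i) (E i)"
      unfolding edge_weights_def using A by (intro CollectI exI[of _ y] exI[of _ x])
        (auto simp: insert_commute)
    then show "f i y - f i x \<in> {1..n i}" using ew A(1) unfolding n_def by simp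
    show "nat \<bar>int (g (i, y)) - int (g (i, x))\<bar> = 2 * (f i y - f i x) + 2 * S i - 1"
      using A(4,5) unfolding g_def by auto
  qed
  have wt2: "\<exists>d\<in>{1..n i}. nat \<bar>int (g (i, a)) - int (g (i, b))\<bar> = 2 * d + 2 * S i - 1"
    if A: "i < k" "{a, b} \<in> E i" "a \<noteq> b" for i a b
  proof -
    have "(f i a \<le> lam i \<and> lam i < f i b) \<or> (f i b \<le> lam i \<and> lam i < f i a)"
      using sep A by blast
    then show ?thesis
    proof
      assume "f i a \<le> lam i \<and> lam i < f i b"
      then show ?thesis using wt[of i a b] A by (auto simp: abs_minus_commute)
    next
      assume "f i b \<le> lam i \<and> lam i < f i a"
      then show ?thesis using wt[of i b a] A by (auto simp: insert_commute)
    qed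
  qed
  have SN: "S (Suc i) \<le> N" if "i < k" for i
    unfolding N_def S_def using that by (intro sum_mono2) auto
  have ewg: "edge_weights g (disj_union_E k E) = {w. odd w \<and> w < 2 * card (disj_union_E k E)}"
  proof
    show "edge_weights g (disj_union_E k E) \<subseteq> {w. odd w \<and> w < 2 * card (disj_union_E k E)}"
    proof
      fix w assume "w \<in> edge_weights g (disj_union_E k E)"
      then obtain p q where pq: "{p, q} \<in> disj_union_E k E" "p \<noteq> q" "w = nat \<bar>int (g p) - int (g q)\<bar>"
        unfolding edge_weights_def by blast
      then obtain i e where ie: "i < k" "e \<in> E i" "{p, q} = Pair i ` e"
        unfolding disj_union_E_def by blast
      then obtain x y where xy: "x \<noteq> y" "e = {x, y}" using edges by blast
      have "{p, q} = {(i, x), (i, y)}" using ie xy by simp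
      then have "(p = (i, x) \<and> q = (i, y)) \<or> (p = (i, y) \<and> q = (i, x))"
        by (simp add: doubleton_eq_iff)
      then obtain d where d: "d \<in> {1..n i}" "w = 2 * d + 2 * S i - 1"
      proof
        assume "p = (i, x) \<and> q = (i, y)"
        then show thesis using wt2[of i x y] ie xy pq that by auto
      next
        assume "p = (i, y) \<and> q = (i, x)"
        then show thesis using wt2[of i y x] ie xy pq that by (auto simp: insert_commute)
      qed
      have "w < 2 * N" using d SN[OF ie(1)] SSuc[of i] by auto
      moreover have "odd w" using d by auto
      ultimately show "w \<in> {w. odd w \<and> w < 2 * card (disj_union_E k E)}" using cardE by simp
    qed
  next
    show "{w. odd w \<and> w < 2 * card (disj_union_E k E)} \<subseteq> edge_weights g (disj_union_E k E)"
    proof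
      fix w assume "w \<in> {w. odd w \<and> w < 2 * card (disj_union_E k E)}"
      then have w: "odd w" "w < 2 * N" using cardE by auto
      then obtain m where m: "w = 2 * m + 1" by (metis oddE)
      then have "m < sum n {0..<k}" using w unfolding N_def S_def by simp
      then obtain i where i: "i < k" "S i \<le> m" "m < S (Suc i)"
        using find_block[of m n k] unfolding S_def by blast
      define d where "d = m + 1 - S i"
      have "d \<in> {1..n i}" using i SSuc[of i] unfolding d_def by auto
      then have "d \<in> edge_weights (f i) (E i)" using ew i(1) unfolding n_def by simp
      then obtain x y where xy: "{x, y} \<in> E i" "x \<noteq> y" "d = nat \<bar>int (f i x) - int (f i y)\<bar>"
        unfolding edge_weights_def by blast
      have "(f i x \<le> lam i \<and> lam i < f i y) \<or> (f i y \<le> lam i \<and> lam i < f i x)"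
        using sep i(1) xy by blast
      then obtain a b where ab: "{a, b} \<in> E i" "a \<noteq> b" "f i a \<le> lam i" "lam i < f i b"
          "d = f i b - f i a"
      proof
        assume "f i x \<le> lam i \<and> lam i < f i y"
        then show thesis using that[of x y] xy by auto
      next
        assume "f i y \<le> lam i \<and> lam i < f i x"
        then show thesis using that[of y x] xy by (auto simp: insert_commute)
      qed
      have "nat \<bar>int (g (i, b)) - int (g (i, a))\<bar> = w"
        using wt[OF i(1) ab(1-4)] ab(5) m i(2) unfolding d_def by auto
      moreover have "{(i, b), (i, a)} \<in> disj_union_E k E"
        unfolding disj_union_E_def using i(1) ab(1)
        by (intro UN_I[of i]) (auto intro!: image_eqI[of _ _ "{a, b}"])
      moreover have "(i, b) \<noteq> (i, a)" using ab by auto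
      ultimately show "w \<in> edge_weights g (disj_union_E k E)"
        unfolding edge_weights_def by blast
    qed
  qed
  show ?thesis unfolding odd_graceful_def using injg rngg ewg by blast
qed

theorem theorem3:
  fixes V :: "nat \<Rightarrow> 'a set" and E :: "nat \<Rightarrow> 'a set set" and k :: nat
  assumes blocks: "\<forall>i<k. nonseparable (V i) (E i)"
    and nontrivial: "\<forall>i<k. E i \<noteq> {}"
    and alpha: "\<forall>i<k. has_alpha_labeling (V i) (E i)"
  shows "odd_graceful (disj_union_V k V) (disj_union_E k E)"
proof -
  have sg: "simple_graph (V i) (E i)" if "i < k" for i
    using blocks that by (simp add: nonseparable_def)
  have edges: "\<forall>i<k. \<forall>e\<in>E i. \<exists>x y. x \<noteq> y \<and> x \<in> V i \<and> y \<in> V i \<and> e = {x, y}"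
  proof (intro allI impI)
    fix i assume "i < k"
    then show "\<forall>e\<in>E i. \<exists>x y. x \<noteq> y \<and> x \<in> V i \<and> y \<in> V i \<and> e = {x, y}"
      using sg by (simp add: simple_graph_def)
  qed
  have fin: "\<forall>i<k. finite (E i)"
  proof (intro allI impI)
    fix i assume i: "i < k"
    have "E i \<subseteq> Pow (V i)"
    proof
      fix e assume "e \<in> E i"
      then obtain x y where "x \<in> V i" "y \<in> V i" "e = {x, y}" using edges i by meson
      then show "e \<in> Pow (V i)" by simp
    qed
    moreover have "finite (V i)" using sg[OF i] by (simp add: simple_graph_def)
    ultimately show "finite (E i)" by (meson finite_Pow_iff finite_subset)
  qed
  have "\<forall>i. \<exists>fl. i < k \<longrightarrow> alpha_labeling (V i) (E i) (fst fl) \<and>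
      (\<forall>x y. {x, y} \<in> E i \<and> x \<noteq> y \<longrightarrow>
        (int (fst fl x) \<le> snd fl \<and> snd fl < int (fst fl y)) \<or> (int (fst fl y) \<le> snd fl \<and> snd fl < int (fst fl x)))"
  proof
    fix i
    show "\<exists>fl. i < k \<longrightarrow> alpha_labeling (V i) (E i) (fst fl) \<and>
      (\<forall>x y. {x, y} \<in> E i \<and> x \<noteq> y \<longrightarrow>
        (int (fst fl x) \<le> snd fl \<and> snd fl < int (fst fl y)) \<or> (int (fst fl y) \<le> snd fl \<and> snd fl < int (fst fl x)))"
    proof (cases "i < k")
      case True
      then obtain f where f: "alpha_labeling (V i) (E i) f" using alpha unfolding has_alpha_labeling_def by blast
      then obtain l where "\<forall>x y. {x, y} \<in> E i \<and> x \<noteq> y \<longrightarrow>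
        (int (f x) \<le> l \<and> l < int (f y)) \<or> (int (f y) \<le> l \<and> l < int (f x))"
        unfolding alpha_labeling_def by blast
      then show ?thesis using f by (intro exI[of _ "(f, l)"]) simp
    qed simp
  qed
  from choice[OF this] obtain FL where FL0: "\<forall>i. i < k \<longrightarrow> alpha_labeling (V i) (E i) (fst (FL i)) \<and>
      (\<forall>x y. {x, y} \<in> E i \<and> x \<noteq> y \<longrightarrow>
        (int (fst (FL i) x) \<le> snd (FL i) \<and> snd (FL i) < int (fst (FL i) y)) \<or>
        (int (fst (FL i) y) \<le> snd (FL i) \<and> snd (FL i) < int (fst (FL i) x)))"
    by (rule exE)
  then have FL: "\<forall>i<k. alpha_labeling (V i) (E i) (fst (FL i)) \<and>
      (\<forall>x y. {x, y} \<in> E i \<and> x \<noteq> y \<longrightarrow>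
        (int (fst (FL i) x) \<le> snd (FL i) \<and> snd (FL i) < int (fst (FL i) y)) \<or>
        (int (fst (FL i) y) \<le> snd (FL i) \<and> snd (FL i) < int (fst (FL i) x)))"
    .
  define f where "f i = fst (FL i)" for i
  define L where "L i = snd (FL i)" for i
  define lam where "lam i = nat (L i)" for i
  have grace: "graceful_labeling (V i) (E i) (f i)" if "i < k" for i
  proof -
    have "alpha_labeling (V i) (E i) (f i)"
      unfolding f_def using conjunct1[OF FL[rule_format, OF that]] .
    then show ?thesis by (simp add: alpha_labeling_def)
  qed
  have sepI: "\<forall>x y. {x, y} \<in> E i \<and> x \<noteq> y \<longrightarrow>
        (int (f i x) \<le> L i \<and> L i < int (f i y)) \<or> (int (f i y) \<le> L i \<and> L i < int (f i x))"
    if "i < k" for i unfolding f_def L_def using conjunct2[OF FL[rule_format, OF that]] .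
  have Lb: "0 \<le> L i \<and> L i < int (card (E i))" if i: "i < k" for i
  proof -
    obtain e where "e \<in> E i" using nontrivial i by blast
    then obtain x y where xy: "x \<noteq> y" "x \<in> V i" "y \<in> V i" "{x, y} \<in> E i"
      using edges i by (metis insert_iff)
    have rg: "f i ` V i \<subseteq> {0..card (E i)}" using grace[OF i] by (simp add: graceful_labeling_def)
    have "f i x \<le> card (E i)" "f i y \<le> card (E i)" using rg xy by auto
    moreover have "(int (f i x) \<le> L i \<and> L i < int (f i y)) \<or> (int (f i y) \<le> L i \<and> L i < int (f i x))"
      using sepI[OF i] xy by blast
    ultimately show ?thesis by linarith
  qed
  show ?thesis
  proof (rule union_odd_graceful[where f = f and lam = lam])
    show "\<forall>i<k. finite (E i)" by (rule fin)
    show "\<forall>i<k. \<forall>e\<in>E i. \<exists>x y. x \<noteq> y \<and> x \<in> V i \<and> y \<in> V i \<and> e = {x, y}" by (rule edges)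
    show "\<forall>i<k. inj_on (f i) (V i)" using grace by (simp add: graceful_labeling_def)
    show "\<forall>i<k. f i ` V i \<subseteq> {0..card (E i)}" using grace by (simp add: graceful_labeling_def)
    show "\<forall>i<k. edge_weights (f i) (E i) = {1..card (E i)}" using grace by (simp add: graceful_labeling_def)
    show "\<forall>i<k. lam i < card (E i)" proof (intro allI impI)
      fix i assume "i < k"
      then show "lam i < card (E i)" using Lb[of i] unfolding lam_def by linarith
    qed
    show "\<forall>i<k. \<forall>x y. {x, y} \<in> E i \<and> x \<noteq> y \<longrightarrow>
                 (f i x \<le> lam i \<and> lam i < f i y) \<or> (f i y \<le> lam i \<and> lam i < f i x)"
    proof (intro allI impI)
      fix i x y assume i: "i < k" and xy: "{x, y} \<in> E i \<and> x \<noteq> y"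
      have "0 \<le> L i" using Lb[OF i] by simp
      then have c: "\<And>m. (m \<le> lam i) = (int m \<le> L i)" "\<And>m. (lam i < m) = (L i < int m)"
        unfolding lam_def by linarith+
      show "(f i x \<le> lam i \<and> lam i < f i y) \<or> (f i y \<le> lam i \<and> lam i < f i x)"
        unfolding c using sepI[OF i] xy by blast
    qed
  qed
qed

end
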